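(* Let $n,m\ge 1$, $a\in\mathbb{R}^n$, $d\in\mathbb{R}^m$ with $\|a\|\le\|d\|$ and $m>1$. Let $$H=\{(x,y)\in\mathbb{R}^{n+m} : a^\mathsf{T} x+d^\mathsf{T} y=-1\},\qquad S_{\le 0}=\{(x,y)\in\mathbb{R}^{n+m} : \|x\|\le\|y\|,\ a^\mathsf{T} x+d^\mathsf{T} y\le 0\}.$$ Let $(\bar x,\bar y)\in\mathbb{R}^{n+m}$ satisfy $\|\bar x\|>\|\bar y\|$ and $a^\mathsf{T}\bar x+d^\mathsf{T}\bar y=-1$, and let $\lambda=\bar x/\|\bar x\|$. Define $$G(\lambda)=\{\beta\in\mathbb{R}^m : \|\beta\|=1,\ a^\mathsf{T}\lambda+d^\mathsf{T}\beta\le 0\},\qquad C_{G(\lambda)}=\{(x,y)\in\mathbb{R}^{n+m} : -\lambda^\mathsf{T} x+\beta^\mathsf{T} y\le 0\ \ \forall \beta\in G(\lambda)\}.$$ Then $C_{G(\lambda)}$ is maximal $S_{\le 0}$-free with respect to $H$, and $(\bar x,\bar y)\in\operatorname{int}(C_{G(\lambda)})$.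
   Context: $\|\cdot\|$ is the Euclidean norm. For a closed set $S\subseteq\mathbb{R}^N$, a convex set $C\subseteq\mathbb{R}^N$ is $S$-free if $\operatorname{int}(C)\cap S=\emptyset$. Given an affine hyperplane $H$, a closed convex set $C$ is $S$-free with respect to $H$ if $C\cap H$ is $(S\cap H)$-free with respect to the induced topology of $H$ (i.e. the interior of $C\cap H$ relative to $H$ does not meet $S$); it is maximal $S$-free with respect to $H$ if for every closed convex $C'\supseteq C$ that is $S$-free with respect to $H$ one has $C'\cap H\subseteq C\cap H$. *)

theory Defs
  imports "HOL-Analysis.Analysis"
begin

definition S_free_wrt :: "'a::real_normed_vector set \<Rightarrow> 'a set \<Rightarrow> 'a set \<Rightarrow> bool" where
  "S_free_wrt H S C \<longleftrightarrow> closed C \<and> convex C \<and>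
     ((top_of_set H) interior_of (C \<inter> H)) \<inter> (S \<inter> H) = {}"

definition max_S_free_wrt :: "'a::real_normed_vector set \<Rightarrow> 'a set \<Rightarrow> 'a set \<Rightarrow> bool" where
  "max_S_free_wrt H S C \<longleftrightarrow> S_free_wrt H S C \<and>
     (\<forall>C'. C \<subseteq> C' \<and> S_free_wrt H S C' \<longrightarrow> C' \<inter> H \<subseteq> C \<inter> H)"

end

theory Submission
  imports Defs
begin

lemma arccos_repr:
  fixes A P :: real
  assumes "A\<^sup>2 + P\<^sup>2 = 1" "P \<ge> 0"
  shows "cos (arccos A) = A \<and> sin (arccos A) = P \<and> 0 \<le> arccos A \<and> arccos A \<le> pi"
proof -
  have h: "-1 \<le> A \<and> A \<le> 1"
  proof -
    have "A\<^sup>2 \<le> 1" using assms(1) by (metis le_add_same_cancel1 zero_le_power2)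
    then have "\<bar>A\<bar> \<le> 1" by (simp add: abs_square_le_1)
    then show ?thesis by linarith
  qed
  have "P = sqrt (1 - A\<^sup>2)" using assms by (metis add_diff_cancel_left' real_sqrt_unique)
  then show ?thesis using h by (simp add: sin_arccos arccos_lbound arccos_ubound)
qed

lemma trig_aux:
  fixes A P c \<sigma> s Q :: real
  assumes "A\<^sup>2 + P\<^sup>2 = 1" "P \<ge> 0" "c\<^sup>2 + \<sigma>\<^sup>2 = 1" "\<sigma> \<ge> 0" "s\<^sup>2 + Q\<^sup>2 = 1" "Q \<ge> 0"
    and h1: "c - s*A + P*Q > 0" and h2: "A > c"
  shows "A*c + P*\<sigma> > s"
proof -
  define \<psi> where "\<psi> = arccos A"
  define \<phi> where "\<phi> = arccos c"
  define \<tau> where "\<tau> = arccos s"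
  note a1 = arccos_repr[OF assms(1,2), folded \<psi>_def]
  note a2 = arccos_repr[OF assms(3,4), folded \<phi>_def]
  note a3 = arccos_repr[OF assms(5,6), folded \<tau>_def]
  have "cos \<phi> > cos (\<tau> + \<psi>)" using h1 a1 a2 a3 by (simp add: cos_add algebra_simps)
  have "\<phi> > \<psi>"
  proof (rule ccontr)
    assume "\<not> \<phi> > \<psi>"
    then have "cos \<psi> \<le> cos \<phi>" using a1 a2 cos_mono_le_eq[of \<psi> \<phi>] by linarith
    then show False using a1 a2 h2 by simp
  qed
  have "\<tau> > \<phi> - \<psi>"
  proof (cases "\<tau> + \<psi> \<le> pi")
    case True
    then have "\<tau> + \<psi> > \<phi>" using \<open>cos \<phi> > cos (\<tau> + \<psi>)\<close> a1 a2 a3 cos_mono_less_eq[of "\<tau>+\<psi>" \<phi>] by linarith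
    then show ?thesis by simp
  next
    case False
    then show ?thesis using a2 by linarith
  qed
  then have "cos \<tau> < cos (\<phi> - \<psi>)" using a1 a2 a3 \<open>\<phi> > \<psi>\<close> cos_mono_less_eq[of \<tau> "\<phi> - \<psi>"] by linarith
  then show ?thesis using a1 a2 a3 by (simp add: cos_diff algebra_simps)
qed

lemma exists_orth_unit:
  fixes u :: "real^'m"
  assumes "CARD('m) > 1"
  shows "\<exists>v. norm v = 1 \<and> u \<bullet> v = 0"
proof -
  have "dim (span {u}) \<le> 1" using dim_le_card[of "span {u}" "{u}"] by simp
  moreover have "dim (UNIV :: (real^'m) set) = CARD('m)" by simp
  ultimately have "span {u} \<noteq> UNIV" using assms by (metis not_le)
  then obtain w :: "real^'m" where w: "w \<noteq> 0" "\<forall>x\<in>span {u}. w \<bullet> x = 0"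
    using span_not_UNIV_orthogonal by blast
  have "w \<bullet> u = 0" using w span_base[of u "{u}"] by blast
  then show ?thesis using w(1)
    by (intro exI[of _ "w /\<^sub>R norm w"]) (simp add: inner_commute)
qed

lemma orth_decomp:
  fixes u b :: "real^'m"
  assumes "CARD('m) > 1" "norm u = 1" "norm b = 1"
  shows "\<exists>v. norm v = 1 \<and> u \<bullet> v = 0 \<and> b = (b \<bullet> u) *\<^sub>R u + sqrt (1 - (b \<bullet> u)\<^sup>2) *\<^sub>R v"
proof -
  define w where "w = b - (b \<bullet> u) *\<^sub>R u"
  have uu: "u \<bullet> u = 1" using assms(2) by (simp add: dot_square_norm)
  have bb: "b \<bullet> b = 1" using assms(3) by (simp add: dot_square_norm)
  have ww: "w \<bullet> w = 1 - (b \<bullet> u)\<^sup>2"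
    unfolding w_def by (simp add: inner_diff_left inner_diff_right uu bb inner_commute power2_eq_square)
  have uw: "u \<bullet> w = 0" unfolding w_def by (simp add: inner_diff_right uu inner_commute)
  show ?thesis
  proof (cases "w = 0")
    case True
    then have "(b \<bullet> u)\<^sup>2 = 1" using ww by simp
    moreover obtain v :: "real^'m" where "norm v = 1" "u \<bullet> v = 0" using exists_orth_unit assms(1) by blast
    ultimately show ?thesis using True unfolding w_def by (intro exI[of _ v]) simp
  next
    case False
    have nw: "norm w = sqrt (1 - (b \<bullet> u)\<^sup>2)" using ww by (simp add: norm_eq_sqrt_inner)
    show ?thesis
    proof (intro exI[of _ "w /\<^sub>R norm w"] conjI)
      show "norm (w /\<^sub>R norm w) = 1" using False by simp
      show "u \<bullet> (w /\<^sub>R norm w) = 0" using uw by simp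
      show "b = (b \<bullet> u) *\<^sub>R u + sqrt (1 - (b \<bullet> u)\<^sup>2) *\<^sub>R (w /\<^sub>R norm w)"
        using False by (simp add: nw[symmetric] w_def)
    qed
  qed
qed

theorem theorem8:
  fixes a :: "real^'n" and d :: "real^'m" and xb :: "real^'n" and yb :: "real^'m"
  assumes m_gt1: "CARD('m) > 1"
    and ad: "norm a \<le> norm d"
    and bar_norm: "norm xb > norm yb"
    and bar_H: "a \<bullet> xb + d \<bullet> yb = -1"
  shows "let H = {(x :: real^'n, y :: real^'m). a \<bullet> x + d \<bullet> y = -1};
             S = {(x :: real^'n, y :: real^'m). norm x \<le> norm y \<and> a \<bullet> x + d \<bullet> y \<le> 0};
             lam = xb /\<^sub>R norm xb;
             G = {\<beta> :: real^'m. norm \<beta> = 1 \<and> a \<bullet> lam + d \<bullet> \<beta> \<le> 0};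
             C = {(x :: real^'n, y :: real^'m). \<forall>\<beta>\<in>G. - (lam \<bullet> x) + \<beta> \<bullet> y \<le> 0}
         in max_S_free_wrt H S C \<and> (xb, yb) \<in> interior C"
proof -
  define H where "H = {(x :: real^'n, y :: real^'m). a \<bullet> x + d \<bullet> y = -1}"
  define S where "S = {(x :: real^'n, y :: real^'m). norm x \<le> norm y \<and> a \<bullet> x + d \<bullet> y \<le> 0}"
  define lam where "lam = xb /\<^sub>R norm xb"
  define G where "G = {\<beta> :: real^'m. norm \<beta> = 1 \<and> a \<bullet> lam + d \<bullet> \<beta> \<le> 0}"
  define C where "C = {(x :: real^'n, y :: real^'m). \<forall>\<beta>\<in>G. - (lam \<bullet> x) + \<beta> \<bullet> y \<le> 0}"
  have xb0: "xb \<noteq> 0" using bar_norm by (metis norm_ge_zero norm_zero not_le)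
  have lam1: "norm lam = 1" using xb0 by (simp add: lam_def)
  have lamlam: "lam \<bullet> lam = 1" using lam1 by (simp add: dot_square_norm)
  have lamxb: "lam \<bullet> xb = norm xb" using xb0
    by (simp add: lam_def dot_square_norm power2_eq_square)
  have lamle: "lam \<bullet> x \<le> norm x" for x :: "real^'n"
    using norm_cauchy_schwarz[of lam x] lam1 by simp
  have betale: "\<beta> \<bullet> y \<le> norm y" if "\<beta> \<in> G" for \<beta> y
    using norm_cauchy_schwarz[of \<beta> y] that by (simp add: G_def)
  have memH: "q \<in> H \<longleftrightarrow> (a, d) \<bullet> q = -1" for q
    by (cases q) (simp add: H_def)
  have memC: "q \<in> C \<longleftrightarrow> (\<forall>\<beta>\<in>G. (-lam, \<beta>) \<bullet> q \<le> 0)" for q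
    by (cases q) (simp add: C_def)
  have memS: "(x, y) \<in> S \<longleftrightarrow> norm x \<le> norm y \<and> a \<bullet> x + d \<bullet> y \<le> 0" for x y
    by (simp add: S_def)
  define K where "K = {q :: (real^'n) \<times> (real^'m). norm (snd q) < lam \<bullet> fst q}"
  have openK: "open K" unfolding K_def
    by (rule open_Collect_less) (intro continuous_intros)+
  have KC: "K \<subseteq> C"
  proof
    fix q assume "q \<in> K"
    then obtain x y where q: "q = (x, y)" "norm y < lam \<bullet> x" by (cases q) (auto simp: K_def)
    have "\<forall>\<beta>\<in>G. - (lam \<bullet> x) + \<beta> \<bullet> y \<le> 0" using betale q(2) by (smt (verit))
    then show "q \<in> C" using q(1) by (simp add: C_def)
  qed
  have KintC: "K \<subseteq> interior C" using openK KC interior_maximal by blast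
  have wK: "(xb, yb) \<in> K" using bar_norm lamxb by (simp add: K_def)
  have Cconv: "convex C" and Cclosed: "closed C"
  proof -
    have "C = (\<Inter>\<beta>\<in>G. {q. (-lam, \<beta>) \<bullet> q \<le> 0})" using memC by auto
    then show "convex C" "closed C"
      by (auto intro!: convex_INT closed_INT convex_halfspace_le closed_halfspace_le)
  qed
  have free: "S_free_wrt H S C"
    unfolding S_free_wrt_def
  proof (intro conjI Cclosed Cconv)
    show "(top_of_set H interior_of (C \<inter> H)) \<inter> (S \<inter> H) = {}"
    proof (rule ccontr)
      assume "(top_of_set H interior_of (C \<inter> H)) \<inter> (S \<inter> H) \<noteq> {}"
      then obtain x y where qi: "(x, y) \<in> top_of_set H interior_of (C \<inter> H)"
        and qS: "(x, y) \<in> S" and qH: "(x, y) \<in> H" by auto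
      obtain U where U: "openin (top_of_set H) U" "(x, y) \<in> U" "U \<subseteq> C \<inter> H"
        using qi unfolding interior_of_def by blast
      obtain e where e: "e > 0" "\<forall>q'\<in>H. dist q' (x, y) < e \<longrightarrow> q' \<in> U"
        using U(1,2) unfolding openin_euclidean_subtopology_iff by blast
      have loc: "\<And>q'. q' \<in> H \<Longrightarrow> dist q' (x, y) < e \<Longrightarrow> q' \<in> C" using e U(3) by blast
      have qC: "(x, y) \<in> C" using U by blast
      have nxy: "norm x \<le> norm y" using qS memS by blast
      have hxy: "a \<bullet> x + d \<bullet> y = -1" using qH by (simp add: H_def)
      have y0: "y \<noteq> 0" using nxy hxy by auto
      have d0: "d \<noteq> 0" using ad hxy by auto
      define r where "r = norm y"
      have r0: "r > 0" using y0 by (simp add: r_def)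
      define \<beta>0 where "\<beta>0 = y /\<^sub>R r"
      have nb0: "norm \<beta>0 = 1" using r0 by (simp add: \<beta>0_def r_def)
      have b0y: "\<beta>0 \<bullet> y = r" using r0 by (simp add: \<beta>0_def r_def dot_square_norm power2_eq_square)
      have yb0: "y = r *\<^sub>R \<beta>0" using r0 by (simp add: \<beta>0_def)
      show False
      proof (cases "\<beta>0 \<in> G")
        case True
        have "\<beta>0 \<bullet> y \<le> lam \<bullet> x" using qC True by (simp add: C_def)
        then have eqc: "lam \<bullet> x = r" using b0y lamle[of x] nxy r_def by linarith
        define g where "g = (-lam, \<beta>0)"
        define n where "n = (a, d)"
        define h where "h = (n \<bullet> n) *\<^sub>R g - (g \<bullet> n) *\<^sub>R n"
        have gq: "g \<bullet> (x, y) = 0" using eqc b0y by (simp add: g_def)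
        have nq: "n \<bullet> (x, y) = -1" using hxy by (simp add: n_def)
        have nh: "n \<bullet> h = 0" by (simp add: h_def inner_diff_right inner_commute)
        have hh: "h \<bullet> h = (n \<bullet> n) * (g \<bullet> h)"
          by (simp add: h_def inner_diff_left nh[unfolded h_def])
        have n0: "n \<noteq> 0" using nq by auto
        have nn: "n \<bullet> n > 0" using n0 by simp
        have gh: "g \<bullet> h > 0"
        proof (rule ccontr)
          assume "\<not> g \<bullet> h > 0"
          moreover have "h \<bullet> h \<ge> 0" by simp
          ultimately have "g \<bullet> h = 0" using hh nn by (smt (verit) mult_pos_neg)
          then have "h = 0" using hh by simp
          then have eq: "(n \<bullet> n) *\<^sub>R g = (g \<bullet> n) *\<^sub>R n" by (simp add: h_def)
          have "(n \<bullet> n) * (g \<bullet> (x, y)) = (g \<bullet> n) * (n \<bullet> (x, y))"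
            using arg_cong[OF eq, of "\<lambda>t. t \<bullet> (x, y)"] by simp
          then have "g \<bullet> n = 0" using gq nq by simp
          then have "g = 0" using eq nn by simp
          then show False using nb0 by (simp add: g_def zero_prod_def)
        qed
        have h0: "h \<noteq> 0" using gh by auto
        define t where "t = e / (2 * norm h)"
        have t0: "t > 0" using e h0 by (simp add: t_def)
        define q' where "q' = (x, y) + t *\<^sub>R h"
        have "q' \<in> H" using nq nh by (simp add: memH q'_def n_def[symmetric] inner_add_right)
        moreover have "dist q' (x, y) < e" using h0 e by (simp add: q'_def dist_norm t_def)
        ultimately have "q' \<in> C" by (rule loc)
        then have "g \<bullet> q' \<le> 0" using True memC g_def by blast
        moreover have "g \<bullet> q' = t * (g \<bullet> h)" using gq by (simp add: q'_def inner_add_right)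
        ultimately show False using t0 gh by (simp add: mult_le_0_iff)
      next
        case False
        define D where "D = norm d"
        have D0: "D > 0" using d0 by (simp add: D_def)
        define u where "u = - (1 / D) *\<^sub>R d"
        have nu: "norm u = 1" using D0 by (simp add: u_def D_def)
        have du: "d = - D *\<^sub>R u" using D0 by (simp add: u_def)
        obtain v where v: "norm v = 1" "u \<bullet> v = 0"
          and bdec: "\<beta>0 = (\<beta>0 \<bullet> u) *\<^sub>R u + sqrt (1 - (\<beta>0 \<bullet> u)\<^sup>2) *\<^sub>R v"
          using orth_decomp[OF m_gt1 nu nb0] by blast
        define c0 where "c0 = \<beta>0 \<bullet> u"
        define s0 where "s0 = sqrt (1 - c0\<^sup>2)"
        have c0le: "\<bar>c0\<bar> \<le> 1" using Cauchy_Schwarz_ineq2[of \<beta>0 u] nb0 nu by (simp add: c0_def)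
        have c0s0: "c0\<^sup>2 + s0\<^sup>2 = 1" "s0 \<ge> 0" using c0le by (simp_all add: s0_def abs_square_le_1)
        define A where "A = a \<bullet> lam"
        have Ale: "\<bar>A\<bar> \<le> D" using Cauchy_Schwarz_ineq2[of a lam] lam1 ad by (simp add: A_def D_def)
        define P where "P = sqrt (D\<^sup>2 - A\<^sup>2)"
        have AP: "(A/D)\<^sup>2 + (P/D)\<^sup>2 = 1" "P/D \<ge> 0"
        proof -
          have "A\<^sup>2 \<le> D\<^sup>2" using Ale by (metis abs_ge_zero abs_le_square_iff abs_of_pos D0)
          then have "P\<^sup>2 = D\<^sup>2 - A\<^sup>2" by (simp add: P_def)
          then show "(A/D)\<^sup>2 + (P/D)\<^sup>2 = 1" using D0 by (simp add: field_simps power_divide)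
          show "P/D \<ge> 0" using D0 \<open>A\<^sup>2 \<le> D\<^sup>2\<close> by (simp add: P_def)
        qed
        define s where "s = lam \<bullet> x"
        have sle: "\<bar>s\<bar> \<le> r" using Cauchy_Schwarz_ineq2[of lam x] lam1 nxy by (simp add: s_def r_def)
        define Q where "Q = sqrt (r\<^sup>2 - s\<^sup>2)"
        have sQ: "(s/r)\<^sup>2 + (Q/r)\<^sup>2 = 1" "Q/r \<ge> 0"
        proof -
          have "s\<^sup>2 \<le> r\<^sup>2" using sle by (metis abs_ge_zero abs_le_square_iff abs_of_pos r0)
          then have "Q\<^sup>2 = r\<^sup>2 - s\<^sup>2" by (simp add: Q_def)
          then show "(s/r)\<^sup>2 + (Q/r)\<^sup>2 = 1" using r0 by (simp add: field_simps power_divide)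
          show "Q/r \<ge> 0" using r0 \<open>s\<^sup>2 \<le> r\<^sup>2\<close> by (simp add: Q_def)
        qed
        have ax: "a \<bullet> x \<ge> s * A - P * Q"
        proof -
          define ap where "ap = a - A *\<^sub>R lam"
          define xp where "xp = x - s *\<^sub>R lam"
          have e1: "a \<bullet> x = A * s + ap \<bullet> xp"
            by (simp add: ap_def xp_def inner_diff_left inner_diff_right lamlam A_def s_def inner_commute)
          have "ap \<bullet> ap = (norm a)\<^sup>2 - A\<^sup>2"
            by (simp add: ap_def inner_diff_left inner_diff_right lamlam A_def inner_commute power2_norm_eq_inner[unfolded power2_eq_square] power2_eq_square)
          moreover have "(norm a)\<^sup>2 \<le> D\<^sup>2" using ad D_def by (simp add: power_mono)
          ultimately have "ap \<bullet> ap \<le> D\<^sup>2 - A\<^sup>2" by simp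
          then have nap: "norm ap \<le> P" unfolding P_def norm_eq_sqrt_inner by (rule real_sqrt_le_mono)
          have "xp \<bullet> xp = (norm x)\<^sup>2 - s\<^sup>2"
            by (simp add: xp_def inner_diff_left inner_diff_right lamlam s_def inner_commute power2_norm_eq_inner[unfolded power2_eq_square] power2_eq_square)
          moreover have "(norm x)\<^sup>2 \<le> r\<^sup>2" using nxy r_def by (simp add: power_mono)
          ultimately have "xp \<bullet> xp \<le> r\<^sup>2 - s\<^sup>2" by simp
          then have nxp: "norm xp \<le> Q" unfolding Q_def norm_eq_sqrt_inner by (rule real_sqrt_le_mono)
          have "\<bar>ap \<bullet> xp\<bar> \<le> norm ap * norm xp" by (rule Cauchy_Schwarz_ineq2)
          also have "\<dots> \<le> P * Q" using mult_mono[OF nap nxp _ norm_ge_zero] nap by (meson norm_ge_zero order_trans)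
          finally show ?thesis using e1 by (simp add: mult.commute abs_le_iff)
        qed
        have h1: "c0 - (s/r) * (A/D) + (P/D) * (Q/r) > 0"
        proof -
          have "d \<bullet> y = - D * r * c0"
            by (simp add: du yb0 c0_def inner_commute)
          then have "r * D * c0 = - (d \<bullet> y)" by (simp add: algebra_simps)
          then have "r * D * c0 - s * A + P * Q > 0" using ax hxy by linarith
          then have "(r * D * c0 - s * A + P * Q) / (r * D) > 0" using r0 D0 by simp
          then show ?thesis using r0 D0 by (simp add: field_simps)
        qed
        have h2: "A/D > c0"
        proof -
          have "a \<bullet> lam + d \<bullet> \<beta>0 > 0" using False nb0 by (simp add: G_def)
          moreover have "d \<bullet> \<beta>0 = - D * c0" by (simp add: du c0_def inner_commute)
          ultimately have "A - D * c0 > 0" by (simp add: A_def)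
          then show ?thesis using D0 by (simp add: field_simps)
        qed
        have key: "(A/D) * c0 + (P/D) * s0 > s/r"
          by (rule trig_aux[OF AP(1,2) c0s0 sQ h1 h2])
        define \<beta>s where "\<beta>s = (A/D) *\<^sub>R u + (P/D) *\<^sub>R v"
        have uu: "u \<bullet> u = 1" using nu by (simp add: dot_square_norm)
        have vv: "v \<bullet> v = 1" using v by (simp add: dot_square_norm)
        have vu: "v \<bullet> u = 0" using v by (simp add: inner_commute)
        have "\<beta>s \<bullet> \<beta>s = (A/D)\<^sup>2 + (P/D)\<^sup>2"
          by (simp add: \<beta>s_def inner_add_left inner_add_right uu vv v(2) vu power2_eq_square)
        then have nbs: "norm \<beta>s = 1" using AP(1) by (simp add: norm_eq_sqrt_inner)
        have "d \<bullet> \<beta>s = - A" using D0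
          by (simp add: du \<beta>s_def inner_add_right uu v(2))
        then have "\<beta>s \<in> G" using nbs by (simp add: G_def A_def)
        then have le: "\<beta>s \<bullet> y \<le> s" using qC by (simp add: C_def s_def)
        have "\<beta>s \<bullet> \<beta>0 = (A/D) * c0 + (P/D) * s0"
          by (subst bdec) (simp add: \<beta>s_def inner_add_left inner_add_right uu vv v(2) vu c0_def s0_def mult.commute)
        then have "\<beta>s \<bullet> y = r * ((A/D) * c0 + (P/D) * s0)" by (simp add: yb0)
        moreover have "r * (s/r) = s" using r0 by simp
        ultimately have "\<beta>s \<bullet> y > s" using key r0 by (metis mult_strict_left_mono)
        then show False using le by simp
      qed
    qed
  qed
  have max: "max_S_free_wrt H S C"
    unfolding max_S_free_wrt_def
  proof (intro conjI free allI impI)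
    fix C' assume C'A: "C \<subseteq> C' \<and> S_free_wrt H S C'"
    then have CC': "C \<subseteq> C'" and C'conv: "convex C'"
      and C'free: "(top_of_set H interior_of (C' \<inter> H)) \<inter> (S \<inter> H) = {}"
      by (auto simp: S_free_wrt_def)
    show "C' \<inter> H \<subseteq> C \<inter> H"
    proof
      fix p assume pC'H: "p \<in> C' \<inter> H"
      show "p \<in> C \<inter> H"
      proof (rule ccontr)
        assume "p \<notin> C \<inter> H"
        then have "p \<notin> C" using pC'H by blast
        then obtain \<beta> where bG: "\<beta> \<in> G" and viol: "(-lam, \<beta>) \<bullet> p > 0"
          using memC by (auto simp: not_le)
        obtain px py where p: "p = (px, py)" by (cases p)
        have pC': "p \<in> C'" using pC'H by blast
        have pH: "a \<bullet> px + d \<bullet> py = -1" using pC'H p by (simp add: H_def)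
        define Dp where "Dp = \<beta> \<bullet> py - lam \<bullet> px"
        have Dp0: "Dp > 0" using viol p by (simp add: Dp_def)
        have nb: "norm \<beta> = 1" using bG by (simp add: G_def)
        have bb: "\<beta> \<bullet> \<beta> = 1" using nb by (simp add: dot_square_norm)
        define Dw where "Dw = lam \<bullet> xb - \<beta> \<bullet> yb"
        have Dw0: "Dw > 0" using betale[OF bG, of yb] lamxb bar_norm by (simp add: Dw_def)
        define \<kappa> where "\<kappa> = a \<bullet> lam + d \<bullet> \<beta>"
        have \<kappa>0: "\<kappa> \<le> 0" using bG by (simp add: G_def \<kappa>_def)
        define c where "c = Dp / (2 * Dw)"
        have c0: "c > 0" using Dp0 Dw0 by (simp add: c_def)
        have cDw: "c * (lam \<bullet> xb - \<beta> \<bullet> yb) = Dp / 2" using Dw0 by (simp add: c_def Dw_def[symmetric])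
        define A where "A = px + c *\<^sub>R xb"
        define B where "B = py + c *\<^sub>R yb"
        define N where "N = \<bar>\<beta> \<bullet> B\<bar> + (A \<bullet> A) / Dp + 1"
        have AA0: "A \<bullet> A \<ge> 0" by simp
        have N1: "N \<ge> \<bar>\<beta> \<bullet> B\<bar> + 1" using Dp0 AA0 by (simp add: N_def)
        have N0: "N \<ge> 0" using N1 by (smt (verit) abs_ge_zero)
        have NDp: "N * Dp \<ge> A \<bullet> A + Dp"
        proof -
          have "N * Dp = \<bar>\<beta> \<bullet> B\<bar> * Dp + A \<bullet> A + Dp" using Dp0 by (simp add: N_def field_simps)
          moreover have "\<bar>\<beta> \<bullet> B\<bar> * Dp \<ge> 0" using Dp0 by simp
          ultimately show ?thesis by linarith
        qed
        define k where "k = c - N * \<kappa>"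
        have "N * \<kappa> \<le> 0" using N0 \<kappa>0 by (simp add: mult_nonneg_nonpos)
        then have k0: "k > 0" using c0 by (simp add: k_def)
        define den where "den = 1 + k"
        have den0: "den > 1" using k0 by (simp add: den_def)
        define X where "X = A + N *\<^sub>R lam"
        define Y where "Y = B + N *\<^sub>R \<beta>"
        define z where "z = (1/den) *\<^sub>R (X, Y)"
        have aXdY: "a \<bullet> X + d \<bullet> Y = - den"
        proof -
          have cbar: "c * (d \<bullet> yb) + c * (a \<bullet> xb) = - c" using bar_H
            by (metis distrib_left mult.commute mult_minus1_right add.commute)
          show ?thesis
            unfolding X_def Y_def A_def B_def den_def k_def \<kappa>_def
            by (simp add: inner_add_right algebra_simps) (insert pH bar_H cbar, linarith)
        qed
        have zlin: "a \<bullet> ((1/den) *\<^sub>R X) + d \<bullet> ((1/den) *\<^sub>R Y) = -1"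
        proof -
          have "a \<bullet> ((1/den) *\<^sub>R X) + d \<bullet> ((1/den) *\<^sub>R Y) = (1/den) * (a \<bullet> X + d \<bullet> Y)"
            by (simp add: algebra_simps)
          also have "\<dots> = -1" using aXdY den0 by simp
          finally show ?thesis .
        qed
        have zH: "z \<in> H" using zlin by (simp add: z_def H_def)
        have normXY: "norm X \<le> norm Y"
        proof -
          have lA: "\<beta> \<bullet> B - lam \<bullet> A = Dp / 2"
            using cDw unfolding A_def B_def Dp_def by (simp add: inner_add_right algebra_simps)
          have e1: "X \<bullet> X = A \<bullet> A + 2 * (N * (lam \<bullet> A)) + N * N"
            unfolding X_def by (simp add: inner_add_left inner_add_right lamlam inner_commute algebra_simps)
          have bY: "\<beta> \<bullet> Y = \<beta> \<bullet> B + N" using bb by (simp add: Y_def inner_add_right)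
          have e2: "(\<beta> \<bullet> Y)\<^sup>2 = (\<beta> \<bullet> B) * (\<beta> \<bullet> B) + 2 * (N * (\<beta> \<bullet> B)) + N * N"
            unfolding bY by (simp add: power2_eq_square algebra_simps)
          have e3: "N * (\<beta> \<bullet> B) - N * (lam \<bullet> A) = N * Dp / 2"
            using arg_cong[OF lA, of "\<lambda>t. N * t"] by (simp add: right_diff_distrib)
          have e5: "(\<beta> \<bullet> B) * (\<beta> \<bullet> B) \<ge> 0" by simp
          have XX: "(norm X)\<^sup>2 \<le> (\<beta> \<bullet> Y)\<^sup>2"
            unfolding power2_norm_eq_inner using e1 e2 e3 e5 NDp Dp0 by linarith
          have bY0: "\<beta> \<bullet> Y \<ge> 0" using N1 bY abs_ge_minus_self[of "\<beta> \<bullet> B"] by linarith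
          have "norm X \<le> \<beta> \<bullet> Y" using XX bY0 by (rule power2_le_imp_le)
          also have "\<beta> \<bullet> Y \<le> norm Y" using norm_cauchy_schwarz[of \<beta> Y] nb by simp
          finally show ?thesis .
        qed
        have zS: "z \<in> S"
        proof -
          have "norm ((1/den) *\<^sub>R X) \<le> norm ((1/den) *\<^sub>R Y)"
            using normXY den0 by (simp add: divide_right_mono)
          then show ?thesis using zlin by (simp add: z_def S_def)
        qed
        define W where "W = (c *\<^sub>R xb + N *\<^sub>R lam, c *\<^sub>R yb + N *\<^sub>R \<beta>)"
        define v where "v = (1/k) *\<^sub>R W"
        have vK: "v \<in> K"
        proof -
          have "norm (c *\<^sub>R yb + N *\<^sub>R \<beta>) \<le> c * norm yb + N"
            using norm_triangle_ineq[of "c *\<^sub>R yb" "N *\<^sub>R \<beta>"] c0 N0 nb by simp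
          also have "\<dots> < c * norm xb + N" using c0 bar_norm by simp
          also have "\<dots> = lam \<bullet> (c *\<^sub>R xb + N *\<^sub>R lam)" using lamxb lamlam by (simp add: inner_add_right)
          finally have "(1/k) * norm (c *\<^sub>R yb + N *\<^sub>R \<beta>) < (1/k) * (lam \<bullet> (c *\<^sub>R xb + N *\<^sub>R lam))"
            using k0 by (simp add: divide_strict_right_mono)
          then show ?thesis using k0 by (simp add: K_def v_def W_def)
        qed
        have vint: "v \<in> interior C'" using vK KintC interior_mono[OF CC'] by blast
        define e where "e = k / den"
        have e0: "e > 0" "e \<le> 1" using k0 by (simp_all add: e_def den_def)
        have zint': "p - e *\<^sub>R (p - v) \<in> interior C'"
          by (rule mem_interior_convex_shrink[OF C'conv vint pC' e0])
        have "p - e *\<^sub>R (p - v) = (1 - e) *\<^sub>R p + e *\<^sub>R v" by (simp add: algebra_simps)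
        also have "\<dots> = (1/den) *\<^sub>R (p + W)"
        proof -
          have "1 - e = 1/den" using k0 by (simp add: e_def den_def field_simps)
          moreover have "e *\<^sub>R v = (1/den) *\<^sub>R W" using k0 by (simp add: e_def v_def den_def)
          ultimately show ?thesis by (simp add: scaleR_right_distrib)
        qed
        also have "\<dots> = z" by (simp add: z_def p W_def X_def Y_def A_def B_def algebra_simps)
        finally have zint: "z \<in> interior C'" using zint' by simp
        have "H \<inter> interior C' \<subseteq> top_of_set H interior_of (C' \<inter> H)"
          by (rule interior_of_maximal) (use interior_subset in auto)
        then have "z \<in> top_of_set H interior_of (C' \<inter> H)" using zint zH by blast
        then show False using C'free zS zH by blast
      qed
    qed
  qed
  have "max_S_free_wrt H S C \<and> (xb, yb) \<in> interior C" using max wK KintC by blast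
  then show ?thesis unfolding Let_def H_def S_def lam_def G_def C_def .
qed

end
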